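(* For every command $C$, every store $\sigma$ and every expectation $f$: (1) $\mathsf{ec}[C](\sigma)\le\mathsf{ect}[C](\mathbf{0})(\sigma)$; (2) $\mathsf{ev}[C](\sigma)(f)\le\mathsf{evt}[C](f)(\sigma)$.
   Context: Let $\mathrm{Var}$ be a finite set of integer-valued variables and $\Sigma = \mathrm{Var}\to\mathbb{Z}$ the set of stores; $\sigma[x\mapsto i]$ is the store updated at $x$. Boolean expressions $\varphi$ are evaluated on stores ($\sigma\models\varphi$). A distribution expression $d$ assigns to each store $\sigma$ a probability distribution $d(\sigma)$ on $\mathbb{Z}$. Commands: $C,D ::= \mathtt{skip} \mid \mathtt{tick}(r) \mid \mathtt{halt} \mid x :\approx d \mid \mathtt{if}_{[\psi]}(\varphi)\{C\}\{D\} \mid \mathtt{while}_{[\psi]}(\varphi)\{C\} \mid C \,\square\, D \mid C \oplus_p D \mid C;D$, with $r$ a nonnegative rational, $p\in[0,1]$. Expectations are functions $f:\Sigma\to[0,\infty]$, with pointwise operations, $\mathbf{r}$ the constant $r$ (so $\mathbf{0}$ is the zero function), $[\varphi](\sigma)\in\{0,1\}$ the indicator, $[c]=1$ if $c=\mathit{true}$ and $0$ otherwise, $0\cdot\infty=0$. Transformer $\mathsf{et}_c$ for $c\in\{\mathit{true},\mathit{false}\}$: $\mathsf{et}_c[\mathtt{skip}](f)=f$; $\mathsf{et}_c[\mathtt{tick}(r)](f)=[c]\cdot\mathbf{r}+f$; $\mathsf{et}_c[\mathtt{halt}](f)=\mathbf{0}$; $\mathsf{et}_c[x:\approx d](f)=\lambda\sigma.\sum_{i}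 d(\sigma)(i)\, f(\sigma[x\mapsto i])$; $\mathsf{et}_c[\mathtt{if}_{[\psi]}(\varphi)\{C\}\{D\}](f)=[\psi\wedge\varphi]\cdot\mathsf{et}_c[C](f)+[\psi\wedge\neg\varphi]\cdot\mathsf{et}_c[D](f)$; $\mathsf{et}_c[\mathtt{while}_{[\psi]}(\varphi)\{C\}](f)=\mathrm{lfp}\,F.\ [\psi\wedge\varphi]\cdot\mathsf{et}_c[C](F)+[\psi\wedge\neg\varphi]\cdot f$ (least fixed point, pointwise order); $\mathsf{et}_c[C\,\square\,D](f)=\max(\mathsf{et}_c[C](f),\mathsf{et}_c[D](f))$; $\mathsf{et}_c[C\oplus_p D](f)=\mathbf{p}\cdot\mathsf{et}_c[C](f)+\mathbf{(1-p)}\cdot\mathsf{et}_c[D](f)$; $\mathsf{et}_c[C;D](f)=\mathsf{et}_c[C](\mathsf{et}_c[D](f))$. Set $\mathsf{ect}[C]=\mathsf{et}_{\mathit{true}}[C]$ and $\mathsf{evt}[C]=\mathsf{et}_{\mathit{false}}[C]$. Configurations: $\mathrm{Conf}=(\mathrm{Cmd}\times\Sigma)\cup\Sigma\cup\{\bot\}$; an active configuration is written $\langle C,\sigma\rangle$. A multidistribution on a set $A$ is a countable multiset $\mu$ of pairs $q:a$ with $a\in A$, $0<q\le1$, and $\sum_{q:a\in\mu}q\le1$; $\mathbb{E}_\mu(g)=\sum_{q:a\in\mu}q\cdot g(a)$ (with multiplicity); the restriction $\mu|_P$ to $P\subseteq A$ keeps exactly the entries $q:a$ with $a\in P$. For $0<p\le1$,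 $p\cdot\{q_i:a_i\}_i=\{p q_i:a_i\}_i$, and for a countable family with $p_i>0$, $\sum_ip_i\le1$, $\biguplus_i p_i\cdot\mu_i$ is the multiset union of the $p_i\cdot\mu_i$. For $h:A\to B$, $\overline h(\{q_i:a_i\}_i)=\{q_i:h(a_i)\}_i$. A configuration $\gamma$ is identified with $\{1:\gamma\}$; entries with probability $0$ are omitted. The one-step relation $\gamma\to_w\mu$ is the least relation closed under: $\langle\mathtt{skip},\sigma\rangle\to_0\sigma$; $\langle\mathtt{tick}(r),\sigma\rangle\to_r\sigma$; $\langle\mathtt{halt},\sigma\rangle\to_0\bot$; $\langle x:\approx d,\sigma\rangle\to_0\{d(\sigma)(i):\sigma[x\mapsto i]\mid d(\sigma)(i)>0\}$; $\langle\mathtt{if}_{[\psi]}(\varphi)\{C\}\{D\},\sigma\rangle\to_0\langle C,\sigma\rangle$ if $\sigma\models\psi\wedge\varphi$, $\to_0\langle D,\sigma\rangle$ if $\sigma\models\psi\wedge\neg\varphi$, $\to_0\bot$ if $\sigma\models\neg\psi$; $\langle\mathtt{while}_{[\psi]}(\varphi)\{C\},\sigma\rangle\to_0\langle C;\mathtt{while}_{[\psi]}(\varphi)\{C\},\sigma\rangle$ if $\sigma\models\psi\wedge\varphi$, $\to_0\sigma$ if $\sigma\models\psi\wedge\neg\varphi$, $\to_0\bot$ if $\sigma\models\neg\psi$; $\langle C\,\square\,D,\sigma\rangle\to_0\langle C,\sigma\rangle$ and $\to_0\langle D,\sigma\rangle$; $\langle C\oplus_pD,\sigma\rangle\to_0\{p:\langle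 C,\sigma\rangle,1-p:\langle D,\sigma\rangle\}$; if $\langle C,\sigma\rangle\to_r\mu$ then $\langle C;D,\sigma\rangle\to_r\overline{\kappa_D}(\mu)$, where $\kappa_D(\langle C',\sigma'\rangle)=\langle C';D,\sigma'\rangle$, $\kappa_D(\sigma')=\langle D,\sigma'\rangle$, $\kappa_D(\bot)=\bot$. The lifted relation $\mu\Rightarrow_w\nu$ on multidistributions is the least relation with: $\mu\Rightarrow_0\mu$; $\{1:\gamma\}\Rightarrow_w\mu$ whenever $\gamma\to_w\mu$; and if $\mu_i\Rightarrow_{w_i}\nu_i$ for all $i$ in a countable index set $I$, $p_i>0$, $\sum_ip_i\le1$, then $\biguplus_ip_i\cdot\mu_i\Rightarrow_{w}\biguplus_ip_i\cdot\nu_i$ with $w=\sum_ip_iw_i$. The multi-step relation $\Rightarrow^w$ is the least relation with: $\mu\Rightarrow^0\mu$; $\mu\Rightarrow^w\nu$ whenever $\mu\Rightarrow_w\nu$; and $\mu\Rightarrow^{w_1+w_2}\nu$ whenever $\mu\Rightarrow^{w_1}\mu'$ and $\mu'\Rightarrow^{w_2}\nu$. The expected cost function is $\mathsf{ec}[C](\sigma)=\sup\{w\mid \{1:\langle C,\sigma\rangle\}\Rightarrow^w\mu\text{ for some }\mu\}$ and the expected value function is $\mathsf{ev}[C](\sigma)(f)=\sup\{\mathbb{E}_{\mu|_\Sigma}(f)\mid \{1:\langle C,\sigma\rangle\}\Rightarrow^w\mu\text{ for some }w,\mu\}$. *)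

theory Defs
  imports "HOL-Probability.Probability"
begin

type_synonym 'v store = "'v \<Rightarrow> int"
type_synonym 'v bexp = "'v store \<Rightarrow> bool"
type_synonym 'v dexp = "'v store \<Rightarrow> int pmf"
type_synonym 'v expec = "'v store \<Rightarrow> ennreal"

datatype 'v cmd =
    Skip
  | Tick rat
  | Halt
  | Sample 'v "'v dexp"
  | If "'v bexp" "'v bexp" "'v cmd" "'v cmd"
  | While "'v bexp" "'v bexp" "'v cmd"
  | NDet "'v cmd" "'v cmd"
  | PChoice "'v cmd" real "'v cmd"
  | Seq "'v cmd" "'v cmd"

primrec wf_cmd :: "'v cmd \<Rightarrow> bool" where
  "wf_cmd Skip = True"
| "wf_cmd (Tick r) = (0 \<le> r)"
| "wf_cmd Halt = True"
| "wf_cmd (Sample x d) = True"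
| "wf_cmd (If psi phi C D) = (wf_cmd C \<and> wf_cmd D)"
| "wf_cmd (While psi phi C) = wf_cmd C"
| "wf_cmd (NDet C D) = (wf_cmd C \<and> wf_cmd D)"
| "wf_cmd (PChoice C p D) = (0 \<le> p \<and> p \<le> 1 \<and> wf_cmd C \<and> wf_cmd D)"
| "wf_cmd (Seq C D) = (wf_cmd C \<and> wf_cmd D)"

definition ind :: "bool \<Rightarrow> ennreal" where
  "ind b = (if b then 1 else 0)"

primrec et :: "bool \<Rightarrow> 'v cmd \<Rightarrow> 'v expec \<Rightarrow> 'v expec" where
  "et c Skip f = f"
| "et c (Tick r) f = (\<lambda>\<sigma>. ind c * ennreal (of_rat r) + f \<sigma>)"
| "et c Halt f = (\<lambda>\<sigma>. 0)"
| "et c (Sample x d) f = (\<lambda>\<sigma>. \<integral>\<^sup>+ i. f (\<sigma>(x := i)) \<partial>measure_pmf (d \<sigma>))"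
| "et c (If psi phi C D) f =
     (\<lambda>\<sigma>. ind (psi \<sigma> \<and> phi \<sigma>) * et c C f \<sigma> + ind (psi \<sigma> \<and> \<not> phi \<sigma>) * et c D f \<sigma>)"
| "et c (While psi phi C) f =
     lfp (\<lambda>F \<sigma>. ind (psi \<sigma> \<and> phi \<sigma>) * et c C F \<sigma> + ind (psi \<sigma> \<and> \<not> phi \<sigma>) * f \<sigma>)"
| "et c (NDet C D) f = (\<lambda>\<sigma>. max (et c C f \<sigma>) (et c D f \<sigma>))"
| "et c (PChoice C p D) f = (\<lambda>\<sigma>. ennreal p * et c C f \<sigma> + ennreal (1 - p) * et c D f \<sigma>)"
| "et c (Seq C D) f = et c C (et c D f)"

definition ect :: "'v cmd \<Rightarrow> 'v expec \<Rightarrow> 'v expec" where "ect = et True"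
definition evt :: "'v cmd \<Rightarrow> 'v expec \<Rightarrow> 'v expec" where "evt = et False"

datatype 'v conf = Act "'v cmd" "'v store" | Fin "'v store" | Bot

text \<open>A (countable) multiset of pairs q:a is represented by its multiplicity function.\<close>
type_synonym 'a mdist = "real \<times> 'a \<Rightarrow> nat"

definition mweight :: "'a mdist \<Rightarrow> ennreal" where
  "mweight \<mu> = (\<integral>\<^sup>+ x. ennreal (fst x) * of_nat (\<mu> x) \<partial>count_space UNIV)"

definition is_mdist :: "'a mdist \<Rightarrow> bool" where
  "is_mdist \<mu> \<longleftrightarrow> (\<forall>x. \<mu> x \<noteq> 0 \<longrightarrow> 0 < fst x \<and> fst x \<le> 1) \<and> mweight \<mu> \<le> 1"

definition expect :: "'a mdist \<Rightarrow> ('a \<Rightarrow> ennreal) \<Rightarrow> ennreal" where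
  "expect \<mu> g = (\<integral>\<^sup>+ x. ennreal (fst x) * of_nat (\<mu> x) * g (snd x) \<partial>count_space UNIV)"

definition restrict_md :: "'a mdist \<Rightarrow> 'a set \<Rightarrow> 'a mdist" where
  "restrict_md \<mu> P = (\<lambda>x. if snd x \<in> P then \<mu> x else 0)"

definition mpoint :: "real \<Rightarrow> 'a \<Rightarrow> 'a mdist" where
  "mpoint q a = (\<lambda>x. if x = (q, a) \<and> 0 < q then 1 else 0)"

definition madd :: "'a mdist \<Rightarrow> 'a mdist \<Rightarrow> 'a mdist" where
  "madd \<mu> \<nu> = (\<lambda>x. \<mu> x + \<nu> x)"

text \<open>p \<cdot> \<mu> for p > 0: entries q:a become (p q):a.\<close>
definition mscale :: "real \<Rightarrow> 'a mdist \<Rightarrow> 'a mdist" where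
  "mscale p \<mu> = (\<lambda>x. \<mu> (fst x / p, snd x))"

text \<open>Multiset union of a countable family (finitely many summands contribute to each entry
  whenever the family consists of multidistributions weighted by p_i > 0 with sum p_i \<le> 1).\<close>
definition munion :: "nat set \<Rightarrow> (nat \<Rightarrow> 'a mdist) \<Rightarrow> 'a mdist" where
  "munion I \<mu> = (\<lambda>x. \<Sum>i \<in> {i \<in> I. \<mu> i x \<noteq> 0}. \<mu> i x)"

definition mmap :: "('a \<Rightarrow> 'b) \<Rightarrow> 'a mdist \<Rightarrow> 'b mdist" where
  "mmap h \<mu> = (\<lambda>x. \<Sum>a \<in> {a. h a = snd x \<and> \<mu> (fst x, a) \<noteq> 0}. \<mu> (fst x, a))"

definition msample :: "'v store \<Rightarrow> 'v \<Rightarrow> 'v dexp \<Rightarrow> 'v conf mdist" where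
  "msample \<sigma> x d = (\<lambda>y. if 0 < fst y \<and> (\<exists>i. snd y = Fin (\<sigma>(x := i)) \<and> fst y = pmf (d \<sigma>) i)
                        then 1 else 0)"

fun kappa :: "'v cmd \<Rightarrow> 'v conf \<Rightarrow> 'v conf" where
  "kappa D (Act C' \<sigma>') = Act (Seq C' D) \<sigma>'"
| "kappa D (Fin \<sigma>') = Act D \<sigma>'"
| "kappa D Bot = Bot"

inductive step :: "'v conf \<Rightarrow> ennreal \<Rightarrow> 'v conf mdist \<Rightarrow> bool" where
  skip: "step (Act Skip \<sigma>) 0 (mpoint 1 (Fin \<sigma>))"
| tick: "step (Act (Tick r) \<sigma>) (ennreal (of_rat r)) (mpoint 1 (Fin \<sigma>))"
| halt: "step (Act Halt \<sigma>) 0 (mpoint 1 Bot)"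
| sample: "step (Act (Sample x d) \<sigma>) 0 (msample \<sigma> x d)"
| if_t: "psi \<sigma> \<and> phi \<sigma> \<Longrightarrow> step (Act (If psi phi C D) \<sigma>) 0 (mpoint 1 (Act C \<sigma>))"
| if_f: "psi \<sigma> \<and> \<not> phi \<sigma> \<Longrightarrow> step (Act (If psi phi C D) \<sigma>) 0 (mpoint 1 (Act D \<sigma>))"
| if_bot: "\<not> psi \<sigma> \<Longrightarrow> step (Act (If psi phi C D) \<sigma>) 0 (mpoint 1 Bot)"
| while_t: "psi \<sigma> \<and> phi \<sigma> \<Longrightarrow>
     step (Act (While psi phi C) \<sigma>) 0 (mpoint 1 (Act (Seq C (While psi phi C)) \<sigma>))"
| while_f: "psi \<sigma> \<and> \<not> phi \<sigma> \<Longrightarrow> step (Act (While psi phi C) \<sigma>) 0 (mpoint 1 (Fin \<sigma>))"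
| while_bot: "\<not> psi \<sigma> \<Longrightarrow> step (Act (While psi phi C) \<sigma>) 0 (mpoint 1 Bot)"
| ndet_l: "step (Act (NDet C D) \<sigma>) 0 (mpoint 1 (Act C \<sigma>))"
| ndet_r: "step (Act (NDet C D) \<sigma>) 0 (mpoint 1 (Act D \<sigma>))"
| pchoice: "step (Act (PChoice C p D) \<sigma>) 0 (madd (mpoint p (Act C \<sigma>)) (mpoint (1 - p) (Act D \<sigma>)))"
| seq: "step (Act C \<sigma>) r \<mu> \<Longrightarrow> step (Act (Seq C D) \<sigma>) r (mmap (kappa D) \<mu>)"

text \<open>Lifted one-step relation; countable index sets are subsets of nat.\<close>
inductive lstep :: "'v conf mdist \<Rightarrow> ennreal \<Rightarrow> 'v conf mdist \<Rightarrow> bool" where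
  refl: "is_mdist \<mu> \<Longrightarrow> lstep \<mu> 0 \<mu>"
| single: "step \<gamma> w \<mu> \<Longrightarrow> lstep (mpoint 1 \<gamma>) w \<mu>"
| union: "\<lbrakk> \<forall>i\<in>I. lstep (\<mu> i) (w i) (\<nu> i); \<forall>i\<in>I. 0 < p i;
           (\<integral>\<^sup>+ i. ennreal (p i) \<partial>count_space I) \<le> 1 \<rbrakk> \<Longrightarrow>
         lstep (munion I (\<lambda>i. mscale (p i) (\<mu> i)))
               (\<integral>\<^sup>+ i. ennreal (p i) * w i \<partial>count_space I)
               (munion I (\<lambda>i. mscale (p i) (\<nu> i)))"

inductive msteps :: "'v conf mdist \<Rightarrow> ennreal \<Rightarrow> 'v conf mdist \<Rightarrow> bool" where
  refl: "msteps \<mu> 0 \<mu>"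
| single: "lstep \<mu> w \<nu> \<Longrightarrow> msteps \<mu> w \<nu>"
| trans: "msteps \<mu> w1 \<mu>' \<Longrightarrow> msteps \<mu>' w2 \<nu> \<Longrightarrow> msteps \<mu> (w1 + w2) \<nu>"

definition ec :: "'v cmd \<Rightarrow> 'v store \<Rightarrow> ennreal" where
  "ec C \<sigma> = Sup {w. \<exists>\<mu>. msteps (mpoint 1 (Act C \<sigma>)) w \<mu>}"

definition ev :: "'v cmd \<Rightarrow> 'v store \<Rightarrow> 'v expec \<Rightarrow> ennreal" where
  "ev C \<sigma> f = Sup {expect (restrict_md \<mu> (range Fin)) (\<lambda>c. case c of Fin \<tau> \<Rightarrow> f \<tau> | _ \<Rightarrow> 0)
                   | \<mu>. \<exists>w. msteps (mpoint 1 (Act C \<sigma>)) w \<mu>}"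

end

theory Submission
  imports Defs
begin

definition good :: "'a mdist \<Rightarrow> bool" where
  "good \<mu> \<longleftrightarrow> (\<forall>x. \<mu> x \<noteq> 0 \<longrightarrow> 0 < fst x \<and> fst x \<le> 1)"

fun G :: "bool \<Rightarrow> 'v expec \<Rightarrow> 'v conf \<Rightarrow> ennreal" where
  "G c h (Act C \<sigma>) = et c C h \<sigma>"
| "G c h (Fin \<sigma>) = h \<sigma>"
| "G c h Bot = 0"

lemma et_mono: "mono (et c C)"
proof (induction C)
  case (Sample x d)
  show ?case by (auto intro!: monoI le_funI nn_integral_mono dest: le_funD)
next
  case (If psi phi C D)
  then show ?case
    by (auto intro!: monoI le_funI add_mono mult_left_mono dest: le_funD monoD)
next
  case (While psi phi C)
  show ?case
  proof (rule monoI)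
    fix x y :: "'a expec" assume xy: "x \<le> y"
    show "et c (While psi phi C) x \<le> et c (While psi phi C) y"
      unfolding et.simps
      by (rule lfp_mono) (use xy in \<open>auto intro!: le_funI add_mono mult_left_mono dest: le_funD\<close>)
  qed
next
  case (NDet C D)
  then show ?case
    by (auto intro!: monoI le_funI max.mono dest: le_funD monoD)
next
  case (PChoice C p D)
  then show ?case
    by (auto intro!: monoI le_funI add_mono mult_left_mono dest: le_funD monoD)
next
  case (Seq C D)
  then show ?case
    by (auto intro!: monoI dest: monoD)
qed (auto intro!: monoI le_funI add_mono dest: le_funD)

lemma et_while_unfold:
  "et c (While psi phi C) f =
     (\<lambda>\<sigma>. ind (psi \<sigma> \<and> phi \<sigma>) * et c C (et c (While psi phi C) f) \<sigma> + ind (psi \<sigma> \<and> \<not> phi \<sigma>) * f \<sigma>)"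
proof -
  have m: "mono (\<lambda>F \<sigma>. ind (psi \<sigma> \<and> phi \<sigma>) * et c C F \<sigma> + ind (psi \<sigma> \<and> \<not> phi \<sigma>) * f \<sigma>)"
    using et_mono[of c C]
    by (auto intro!: monoI le_funI add_mono mult_left_mono dest: le_funD monoD)
  show ?thesis by (simp only: et.simps) (rule lfp_unfold[OF m])
qed

lemma integral_reindex:
  assumes "inj_on K A"
  shows "(\<integral>\<^sup>+ y. F y * indicator (K ` A) y \<partial>count_space UNIV) = (\<integral>\<^sup>+ i. F (K i) \<partial>count_space A)"
proof -
  have "(\<integral>\<^sup>+ i. F (K i) \<partial>count_space A) = (\<integral>\<^sup>+ y. F y \<partial>count_space (K ` A))"
    by (rule nn_integral_bij_count_space) (use assms in \<open>simp add: bij_betw_def\<close>)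
  also have "\<dots> = (\<integral>\<^sup>+ y. F y * indicator (K ` A) y \<partial>count_space UNIV)"
    by (rule nn_integral_count_space_indicator) simp
  finally show ?thesis by simp
qed

lemma expect_mpoint: "expect (mpoint q a) g = (if 0 < q then ennreal q * g a else 0)"
proof (cases "0 < q")
  case True
  have "expect (mpoint q a) g = (\<integral>\<^sup>+ x. (ennreal q * g a) * indicator {(q,a)} x \<partial>count_space UNIV)"
    unfolding expect_def mpoint_def
    by (intro nn_integral_cong) (auto simp: indicator_def True)
  also have "\<dots> = ennreal q * g a"
    by (subst nn_integral_cmult_indicator) auto
  finally show ?thesis using True by simp
next
  case False
  then show ?thesis unfolding expect_def mpoint_def by simp
qed

lemma expect_madd: "expect (madd \<mu> \<nu>) g = expect \<mu> g + expect \<nu> g"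
  unfolding expect_def madd_def
  by (subst nn_integral_add[symmetric]) (auto intro!: nn_integral_cong simp: distrib_left distrib_right)

lemma expect_mscale:
  assumes p: "0 < p"
  shows "expect (mscale p \<mu>) g = ennreal p * expect \<mu> g"
proof -
  let ?S = "\<lambda>y::real \<times> 'a. (p * fst y, snd y)"
  have bij: "bij_betw ?S UNIV UNIV"
    by (rule bij_betw_byWitness[where f'="\<lambda>y. (fst y / p, snd y)"]) (use p in auto)
  have "expect (mscale p \<mu>) g =
      (\<integral>\<^sup>+ x. ennreal (fst x) * of_nat (\<mu> (fst x / p, snd x)) * g (snd x) \<partial>count_space UNIV)"
    unfolding expect_def mscale_def by simp
  also have "\<dots> = (\<integral>\<^sup>+ y. ennreal (fst (?S y)) * of_nat (\<mu> (fst (?S y) / p, snd (?S y))) * g (snd (?S y)) \<partial>count_space UNIV)"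
    by (rule nn_integral_bij_count_space[OF bij, symmetric])
  also have "\<dots> = (\<integral>\<^sup>+ y. ennreal p * (ennreal (fst y) * of_nat (\<mu> y) * g (snd y)) \<partial>count_space UNIV)"
    using p by (intro nn_integral_cong) (auto simp: ennreal_mult' mult.assoc)
  also have "\<dots> = ennreal p * expect \<mu> g"
    unfolding expect_def by (rule nn_integral_cmult) simp
  finally show ?thesis .
qed


lemma mmap_inj:
  assumes "inj k"
  shows "mmap k \<mu> = (\<lambda>x. if snd x \<in> range k then \<mu> (fst x, inv k (snd x)) else 0)"
proof (rule ext)
  fix x :: "real \<times> 'b"
  show "mmap k \<mu> x = (if snd x \<in> range k then \<mu> (fst x, inv k (snd x)) else 0)"
  proof (cases "snd x \<in> range k")
    case True
    then obtain a0 where a0: "snd x = k a0" by auto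
    have "{a. k a = snd x \<and> \<mu> (fst x, a) \<noteq> 0} = (if \<mu> (fst x, a0) \<noteq> 0 then {a0} else {})"
      using assms a0 by (auto simp: inj_def)
    then show ?thesis unfolding mmap_def using True a0 assms by auto
  next
    case False
    have "k a \<noteq> snd x" for a using False by (metis rangeI)
    then have "{a. k a = snd x \<and> \<mu> (fst x, a) \<noteq> 0} = {}" by auto
    then show ?thesis unfolding mmap_def using False by simp
  qed
qed

lemma expect_mmap:
  assumes "inj k"
  shows "expect (mmap k \<mu>) g = expect \<mu> (g \<circ> k)"
proof -
  let ?K = "\<lambda>y. (fst y, k (snd y))"
  have injK: "inj_on ?K UNIV" using assms by (auto simp: inj_def)
  have "expect (mmap k \<mu>) g = (\<integral>\<^sup>+ x. (ennreal (fst x) * of_nat (\<mu> (fst x, inv k (snd x))) * g (snd x))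
           * indicator (range ?K) x \<partial>count_space UNIV)"
    unfolding expect_def mmap_inj[OF assms]
    by (intro nn_integral_cong) (auto simp: indicator_def image_iff)
  also have "\<dots> = (\<integral>\<^sup>+ y. ennreal (fst (?K y)) * of_nat (\<mu> (fst (?K y), inv k (snd (?K y)))) * g (snd (?K y))
           \<partial>count_space UNIV)"
    by (rule integral_reindex[OF injK])
  also have "\<dots> = expect \<mu> (g \<circ> k)"
    unfolding expect_def using assms by simp
  finally show ?thesis .
qed

lemma expect_msample:
  "expect (msample \<sigma> x d) g \<le> (\<integral>\<^sup>+ i. ennreal (pmf (d \<sigma>) i) * g (Fin (\<sigma>(x := i))) \<partial>count_space UNIV)"
proof -
  let ?K = "\<lambda>i. (pmf (d \<sigma>) i, Fin (\<sigma>(x := i)))"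
  let ?A = "{i. 0 < pmf (d \<sigma>) i}"
  have injK: "inj_on ?K ?A"
  proof (rule inj_onI)
    fix i j assume "?K i = ?K j"
    then have "(\<sigma>(x := i)) x = (\<sigma>(x := j)) x" by simp
    then show "i = j" by simp
  qed
  have "expect (msample \<sigma> x d) g = (\<integral>\<^sup>+ y. (ennreal (fst y) * g (snd y)) * indicator (?K ` ?A) y \<partial>count_space UNIV)"
    unfolding expect_def msample_def
    by (intro nn_integral_cong) (auto simp: indicator_def image_iff)
  also have "\<dots> = (\<integral>\<^sup>+ i. ennreal (pmf (d \<sigma>) i) * g (Fin (\<sigma>(x := i))) \<partial>count_space ?A)"
    by (subst integral_reindex[OF injK]) simp
  also have "\<dots> = (\<integral>\<^sup>+ i. ennreal (pmf (d \<sigma>) i) * g (Fin (\<sigma>(x := i))) * indicator ?A i \<partial>count_space UNIV)"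
    by (rule nn_integral_count_space_indicator) simp
  also have "\<dots> \<le> (\<integral>\<^sup>+ i. ennreal (pmf (d \<sigma>) i) * g (Fin (\<sigma>(x := i))) \<partial>count_space UNIV)"
    by (intro nn_integral_mono) (auto simp: indicator_def)
  finally show ?thesis .
qed

lemma swap_count:
  fixes \<phi> :: "nat \<Rightarrow> 'b \<Rightarrow> ennreal"
  shows "(\<integral>\<^sup>+ x. (\<integral>\<^sup>+ i. \<phi> i x \<partial>count_space I) \<partial>count_space UNIV)
       = (\<integral>\<^sup>+ i. (\<integral>\<^sup>+ x. \<phi> i x \<partial>count_space UNIV) \<partial>count_space I)"
proof -
  have e: "\<And>\<psi> :: nat \<Rightarrow> ennreal. (\<integral>\<^sup>+ i. \<psi> i \<partial>count_space I) = (\<Sum>i. \<psi> i * indicator I i)"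
    by (subst nn_integral_count_space_indicator) (auto simp: nn_integral_count_space_nat)
  have "(\<integral>\<^sup>+ x. (\<integral>\<^sup>+ i. \<phi> i x \<partial>count_space I) \<partial>count_space UNIV)
      = (\<integral>\<^sup>+ x. (\<Sum>i. \<phi> i x * indicator I i) \<partial>count_space UNIV)"
    by (simp add: e)
  also have "\<dots> = (\<Sum>i. (\<integral>\<^sup>+ x. \<phi> i x * indicator I i \<partial>count_space UNIV))"
    by (rule nn_integral_suminf) simp
  also have "\<dots> = (\<Sum>i. (\<integral>\<^sup>+ x. \<phi> i x \<partial>count_space UNIV) * indicator I i)"
    by (intro suminf_cong nn_integral_multc) simp
  also have "\<dots> = (\<integral>\<^sup>+ i. (\<integral>\<^sup>+ x. \<phi> i x \<partial>count_space UNIV) \<partial>count_space I)"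
    by (simp add: e)
  finally show ?thesis .
qed

lemma munion_le:
  "(of_nat (munion I F x) :: ennreal) \<le> (\<integral>\<^sup>+ i. of_nat (F i x) \<partial>count_space I)"
  and munion_eq:
  "finite {i \<in> I. F i x \<noteq> 0} \<Longrightarrow> (of_nat (munion I F x) :: ennreal) = (\<integral>\<^sup>+ i. of_nat (F i x) \<partial>count_space I)"
proof -
  let ?S = "{i \<in> I. F i x \<noteq> 0}"
  show eq: "(of_nat (munion I F x) :: ennreal) = (\<integral>\<^sup>+ i. of_nat (F i x) \<partial>count_space I)" if fin: "finite ?S"
  proof -
    have "(\<integral>\<^sup>+ i. of_nat (F i x) \<partial>count_space I) = (\<Sum>i\<in>?S. (of_nat (F i x) :: ennreal))"
      by (rule nn_integral_count_space') (use fin in auto)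
    then show ?thesis unfolding munion_def by simp
  qed
  show "(of_nat (munion I F x) :: ennreal) \<le> (\<integral>\<^sup>+ i. of_nat (F i x) \<partial>count_space I)"
  proof (cases "finite ?S")
    case True then show ?thesis using eq by simp
  next
    case False then show ?thesis unfolding munion_def by simp
  qed
qed

lemma expect_munion_le:
  "expect (munion I F) g \<le> (\<integral>\<^sup>+ i. expect (F i) g \<partial>count_space I)"
proof -
  have "expect (munion I F) g \<le> (\<integral>\<^sup>+ x. ennreal (fst x) * (\<integral>\<^sup>+ i. of_nat (F i x) \<partial>count_space I) * g (snd x) \<partial>count_space UNIV)"
    unfolding expect_def
    by (intro nn_integral_mono mult_right_mono mult_left_mono munion_le) auto
  also have "\<dots> = (\<integral>\<^sup>+ x. (\<integral>\<^sup>+ i. ennreal (fst x) * of_nat (F i x) * g (snd x) \<partial>count_space I) \<partial>count_space UNIV)"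
    by (intro nn_integral_cong) (simp add: nn_integral_cmult nn_integral_multc)
  also have "\<dots> = (\<integral>\<^sup>+ i. expect (F i) g \<partial>count_space I)"
    unfolding expect_def by (rule swap_count)
  finally show ?thesis .
qed

lemma expect_munion_eq:
  assumes "\<And>x. finite {i \<in> I. F i x \<noteq> 0}"
  shows "expect (munion I F) g = (\<integral>\<^sup>+ i. expect (F i) g \<partial>count_space I)"
proof -
  have "expect (munion I F) g = (\<integral>\<^sup>+ x. ennreal (fst x) * (\<integral>\<^sup>+ i. of_nat (F i x) \<partial>count_space I) * g (snd x) \<partial>count_space UNIV)"
    unfolding expect_def
    by (intro nn_integral_cong) (simp add: munion_eq[OF assms])
  also have "\<dots> = (\<integral>\<^sup>+ x. (\<integral>\<^sup>+ i. ennreal (fst x) * of_nat (F i x) * g (snd x) \<partial>count_space I) \<partial>count_space UNIV)"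
    by (intro nn_integral_cong) (simp add: nn_integral_cmult nn_integral_multc)
  also have "\<dots> = (\<integral>\<^sup>+ i. expect (F i) g \<partial>count_space I)"
    unfolding expect_def by (rule swap_count)
  finally show ?thesis .
qed


lemma sum_le_count_integral:
  fixes f :: "'b \<Rightarrow> ennreal"
  assumes "finite T" "T \<subseteq> I"
  shows "(\<Sum>i\<in>T. f i) \<le> (\<integral>\<^sup>+ i. f i \<partial>count_space I)"
proof -
  have "(\<Sum>i\<in>T. f i) = (\<integral>\<^sup>+ i. f i \<partial>count_space T)"
    using assms(1) by (simp add: nn_integral_count_space_finite)
  also have "\<dots> = (\<integral>\<^sup>+ i. f i * indicator T i \<partial>count_space UNIV)"
    by (rule nn_integral_count_space_indicator) simp
  also have "\<dots> \<le> (\<integral>\<^sup>+ i. f i * indicator I i \<partial>count_space UNIV)"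
    using assms(2) by (intro nn_integral_mono) (auto simp: indicator_def)
  also have "\<dots> = (\<integral>\<^sup>+ i. f i \<partial>count_space I)"
    by (rule nn_integral_count_space_indicator[symmetric]) simp
  finally show ?thesis .
qed

lemma p_le_1:
  assumes "(\<integral>\<^sup>+ i. ennreal (p i) \<partial>count_space I) \<le> 1" "i \<in> I"
  shows "p i \<le> 1"
proof -
  have "(\<Sum>j\<in>{i}. ennreal (p j)) \<le> (\<integral>\<^sup>+ i. ennreal (p i) \<partial>count_space I)"
    using assms(2) by (intro sum_le_count_integral) auto
  then have a: "ennreal (p i) \<le> (\<integral>\<^sup>+ i. ennreal (p i) \<partial>count_space I)" by simp
  from order_trans[OF a assms(1)] show ?thesis by simp
qed

lemma fin_collide:
  assumes tot: "(\<integral>\<^sup>+ i. ennreal (p i) \<partial>count_space I) \<le> 1" and q: "0 < q"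
  shows "finite {i \<in> I. q \<le> p i}"
proof (rule ccontr)
  assume inf: "infinite {i \<in> I. q \<le> p i}"
  define n where "n = nat \<lceil>2 / q\<rceil>"
  obtain T where T: "finite T" "card T = n" "T \<subseteq> {i \<in> I. q \<le> p i}"
    using infinite_arbitrarily_large[OF inf] by blast
  have "real n * q \<ge> 2"
  proof -
    have "real n \<ge> 2 / q" unfolding n_def by linarith
    then show ?thesis using q by (simp add: field_simps)
  qed
  moreover have "real n * q \<le> (\<Sum>i\<in>T. p i)"
  proof -
    have "(\<Sum>i\<in>T. q) \<le> (\<Sum>i\<in>T. p i)" using T by (intro sum_mono) auto
    then show ?thesis using T by simp
  qed
  moreover have "(\<Sum>i\<in>T. ennreal (p i)) \<le> 1"
  proof -
    have "(\<Sum>i\<in>T. ennreal (p i)) \<le> (\<integral>\<^sup>+ i. ennreal (p i) \<partial>count_space I)"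
      using T by (intro sum_le_count_integral) auto
    from order_trans[OF this tot] show ?thesis .
  qed
  moreover have "(\<Sum>i\<in>T. ennreal (p i)) = ennreal (\<Sum>i\<in>T. p i)"
    using T q by (intro sum_ennreal) auto
  ultimately show False by simp
qed

lemma good_mpoint: "good (mpoint 1 \<gamma>)"
  unfolding good_def mpoint_def by auto

lemma lstep_good: "lstep \<mu> w \<nu> \<Longrightarrow> good \<mu>"
proof (induction rule: lstep.induct)
  case (refl \<mu>)
  then show ?case unfolding good_def is_mdist_def by auto
next
  case (single \<gamma> w \<mu>)
  show ?case by (rule good_mpoint)
next
  case (union I \<mu> w \<nu> p)
  show ?case unfolding good_def
  proof (intro allI impI)
    fix x assume nz: "munion I (\<lambda>i. mscale (p i) (\<mu> i)) x \<noteq> 0"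
    have "{i \<in> I. mscale (p i) (\<mu> i) x \<noteq> 0} \<noteq> {}"
    proof
      assume "{i \<in> I. mscale (p i) (\<mu> i) x \<noteq> 0} = {}"
      then have "munion I (\<lambda>i. mscale (p i) (\<mu> i)) x = 0" unfolding munion_def by (simp only: sum.empty)
      with nz show False by contradiction
    qed
    then obtain i where i: "i \<in> I" "mscale (p i) (\<mu> i) x \<noteq> 0" by blast
    then have nz2: "\<mu> i (fst x / p i, snd x) \<noteq> 0" unfolding mscale_def by simp
    have "good (\<mu> i)" using bspec[OF union(1) i(1)] by (rule conjunct2)
    then have "\<forall>y. \<mu> i y \<noteq> 0 \<longrightarrow> 0 < fst y \<and> fst y \<le> 1" unfolding good_def .
    from spec[OF this, of "(fst x / p i, snd x)"] nz2
    have a: "0 < fst x / p i" "fst x / p i \<le> 1" by simp_all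
    have b: "0 < p i" "p i \<le> 1" using union(2) i(1) p_le_1[OF union(3) i(1)] by auto
    have "fst x \<le> p i" using a(2) b(1) by (simp add: divide_le_eq_1_pos)
    moreover have "0 < fst x" using a(1) b(1) by (simp add: zero_less_divide_iff)
    ultimately show "0 < fst x \<and> fst x \<le> 1" using b by simp
  qed
qed


lemma kappa_inj: "inj (kappa D)"
proof (rule injI)
  fix a b assume e: "kappa D a = kappa D b"
  have ne: "Seq C' D \<noteq> D" for C' :: "'a cmd"
  proof
    assume "Seq C' D = D"
    then have "size (Seq C' D) = size D" by (rule arg_cong)
    then show False by simp
  qed
  from e show "a = b"
    by (cases a; cases b) (auto simp: ne ne[symmetric])
qed

lemma G_kappa: "G c h \<circ> kappa D = G c (et c D h)"
proof (rule ext)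
  fix \<gamma> show "(G c h \<circ> kappa D) \<gamma> = G c (et c D h) \<gamma>"
    by (cases \<gamma>) auto
qed

lemma mpoint_le: "(if 0 < q then ennreal q * a else 0) \<le> ennreal q * a"
  by auto

lemma step_pot: "step \<gamma> w \<mu> \<Longrightarrow> ind c * w + expect \<mu> (G c h) \<le> G c h \<gamma>"
proof (induction arbitrary: h rule: step.induct)
  case (sample x d \<sigma>)
  have "expect (msample \<sigma> x d) (G c h) \<le> (\<integral>\<^sup>+ i. ennreal (pmf (d \<sigma>) i) * G c h (Fin (\<sigma>(x := i))) \<partial>count_space UNIV)"
    by (rule expect_msample)
  also have "\<dots> = G c h (Act (Sample x d) \<sigma>)"
    by (simp add: nn_integral_measure_pmf)
  finally show ?case by simp
next
  case (while_t psi \<sigma> phi C)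
  have "G c h (Act (While psi phi C) \<sigma>) = et c C (et c (While psi phi C) h) \<sigma>"
    using while_t by (simp only: G.simps, subst et_while_unfold) (simp add: ind_def)
  then show ?case by (simp add: expect_mpoint)
next
  case (while_f psi \<sigma> phi C)
  have "G c h (Act (While psi phi C) \<sigma>) = h \<sigma>"
    using while_f by (simp only: G.simps, subst et_while_unfold) (simp add: ind_def)
  then show ?case by (simp add: expect_mpoint)
next
  case (pchoice C p D \<sigma>)
  have "expect (madd (mpoint p (Act C \<sigma>)) (mpoint (1 - p) (Act D \<sigma>))) (G c h)
      \<le> ennreal p * G c h (Act C \<sigma>) + ennreal (1 - p) * G c h (Act D \<sigma>)"
    unfolding expect_madd expect_mpoint by (intro add_mono mpoint_le)
  then show ?case by simp
next
  case (seq C \<sigma> r \<mu> D)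
  have "expect (mmap (kappa D) \<mu>) (G c h) = expect \<mu> (G c (et c D h))"
    by (simp add: expect_mmap[OF kappa_inj] G_kappa)
  then show ?case using seq.IH[of "et c D h"] by simp
qed (auto simp: expect_mpoint ind_def)

lemma lstep_pot: "lstep \<mu> w \<nu> \<Longrightarrow> ind c * w + expect \<nu> (G c h) \<le> expect \<mu> (G c h)"
proof (induction rule: lstep.induct)
  case (refl \<mu>)
  then show ?case by simp
next
  case (single \<gamma> w \<mu>)
  then show ?case using step_pot[OF single] by (simp add: expect_mpoint)
next
  case (union I \<mu> w \<nu> p)
  let ?g = "G c h"
  have goods: "good (\<mu> i)" if "i \<in> I" for i using union(1) that lstep_good by blast
  have fin: "finite {i \<in> I. mscale (p i) (\<mu> i) x \<noteq> 0}" for x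
  proof (cases "{i \<in> I. mscale (p i) (\<mu> i) x \<noteq> 0} = {}")
    case False
    then obtain j where j: "j \<in> I" "\<mu> j (fst x / p j, snd x) \<noteq> 0" unfolding mscale_def by auto
    then have "0 < fst x / p j" using goods[OF j(1)] unfolding good_def by (metis fst_conv snd_conv)
    moreover have "0 < p j" using union(2) j(1) by blast
    ultimately have x0: "0 < fst x" by (auto simp: zero_less_divide_iff)
    have le: "fst x \<le> p i" if i: "i \<in> I" "mscale (p i) (\<mu> i) x \<noteq> 0" for i
    proof -
      have "fst x / p i \<le> 1" using goods[OF i(1)] i(2) unfolding good_def mscale_def
        by (metis fst_conv snd_conv)
      moreover have "0 < p i" using union(2) i(1) by blast
      ultimately show ?thesis by (simp add: divide_le_eq_1_pos)
    qed
    have "{i \<in> I. mscale (p i) (\<mu> i) x \<noteq> 0} \<subseteq> {i \<in> I. fst x \<le> p i}"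
      using le by blast
    then show ?thesis using fin_collide[OF union(3) x0] by (rule finite_subset)
  qed (metis finite.emptyI)
  have IH: "ind c * w i + expect (\<nu> i) ?g \<le> expect (\<mu> i) ?g" if "i \<in> I" for i
    using union(1) that by blast
  have "ind c * (\<integral>\<^sup>+ i. ennreal (p i) * w i \<partial>count_space I) + expect (munion I (\<lambda>i. mscale (p i) (\<nu> i))) ?g
      \<le> ind c * (\<integral>\<^sup>+ i. ennreal (p i) * w i \<partial>count_space I) + (\<integral>\<^sup>+ i. expect (mscale (p i) (\<nu> i)) ?g \<partial>count_space I)"
    by (intro add_left_mono expect_munion_le)
  also have "\<dots> = (\<integral>\<^sup>+ i. ind c * (ennreal (p i) * w i) \<partial>count_space I) + (\<integral>\<^sup>+ i. ennreal (p i) * expect (\<nu> i) ?g \<partial>count_space I)"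
  proof -
    have A: "(\<integral>\<^sup>+ i. expect (mscale (p i) (\<nu> i)) ?g \<partial>count_space I) = (\<integral>\<^sup>+ i. ennreal (p i) * expect (\<nu> i) ?g \<partial>count_space I)"
      using union(2) by (intro nn_integral_cong) (simp add: expect_mscale)
    have B: "ind c * (\<integral>\<^sup>+ i. ennreal (p i) * w i \<partial>count_space I) = (\<integral>\<^sup>+ i. ind c * (ennreal (p i) * w i) \<partial>count_space I)"
      by (rule nn_integral_cmult[symmetric]) simp
    show ?thesis by (simp only: A B)
  qed
  also have "\<dots> = (\<integral>\<^sup>+ i. ennreal (p i) * (ind c * w i + expect (\<nu> i) ?g) \<partial>count_space I)"
    by (subst nn_integral_add[symmetric]) (auto intro!: nn_integral_cong simp: distrib_left mult.left_commute)
  also have "\<dots> \<le> (\<integral>\<^sup>+ i. ennreal (p i) * expect (\<mu> i) ?g \<partial>count_space I)"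
    using IH by (intro nn_integral_mono mult_left_mono) auto
  also have "\<dots> = (\<integral>\<^sup>+ i. expect (mscale (p i) (\<mu> i)) ?g \<partial>count_space I)"
    using union(2) by (intro nn_integral_cong) (simp add: expect_mscale)
  also have "\<dots> = expect (munion I (\<lambda>i. mscale (p i) (\<mu> i))) ?g"
    by (rule expect_munion_eq[symmetric]) (rule fin)
  finally show ?case .
qed

lemma msteps_pot: "msteps \<mu> w \<nu> \<Longrightarrow> ind c * w + expect \<nu> (G c h) \<le> expect \<mu> (G c h)"
proof (induction rule: msteps.induct)
  case (refl \<mu>)
  then show ?case by simp
next
  case (single \<mu> w \<nu>)
  then show ?case by (rule lstep_pot)
next
  case (trans \<mu> w1 \<mu>' w2 \<nu>)
  have "ind c * (w1 + w2) + expect \<nu> (G c h) = ind c * w1 + (ind c * w2 + expect \<nu> (G c h))"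
    by (simp add: distrib_left add.assoc)
  also have "\<dots> \<le> ind c * w1 + expect \<mu>' (G c h)"
    using trans.IH(2) by (rule add_left_mono)
  also have "\<dots> \<le> expect \<mu> (G c h)" by (rule trans.IH(1))
  finally show ?case .
qed

lemma restrict_le:
  "ennreal a * of_nat (if b \<in> range Fin then n else 0) * (case b of Fin \<tau> \<Rightarrow> f \<tau> | _ \<Rightarrow> 0)
    \<le> ennreal a * of_nat n * G False f b"
proof (cases b)
  case (Act C s)
  then have "b \<notin> range Fin" by blast
  then show ?thesis by simp
next
  case (Fin t)
  then show ?thesis by simp
next
  case Bot
  then have "b \<notin> range Fin" by blast
  then show ?thesis by simp
qed

theorem mainTheorem6:
  fixes C :: "'v::finite cmd" and \<sigma> :: "'v store" and f :: "'v expec"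
  assumes "wf_cmd C"
  shows "ec C \<sigma> \<le> ect C (\<lambda>_. 0) \<sigma> \<and> ev C \<sigma> f \<le> evt C f \<sigma>"
proof
  show "ec C \<sigma> \<le> ect C (\<lambda>_. 0) \<sigma>"
    unfolding ec_def
  proof (rule Sup_least)
    fix w assume "w \<in> {w. \<exists>\<mu>. msteps (mpoint 1 (Act C \<sigma>)) w \<mu>}"
    then obtain \<mu> where m: "msteps (mpoint 1 (Act C \<sigma>)) w \<mu>" by blast
    have h: "w + expect \<mu> (G True (\<lambda>_. 0)) \<le> et True C (\<lambda>_. 0) \<sigma>"
      using msteps_pot[OF m, of True "\<lambda>_. 0"] by (simp add: expect_mpoint ind_def)
    have "w \<le> w + expect \<mu> (G True (\<lambda>_. 0))" by (rule add_increasing2) auto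
    from order_trans[OF this h] have "w \<le> et True C (\<lambda>_. 0) \<sigma>" .
    then show "w \<le> ect C (\<lambda>_. 0) \<sigma>" by (simp add: ect_def)
  qed
  show "ev C \<sigma> f \<le> evt C f \<sigma>"
    unfolding ev_def
  proof (rule Sup_least)
    fix e assume "e \<in> {expect (restrict_md \<mu> (range Fin)) (\<lambda>c. case c of Fin \<tau> \<Rightarrow> f \<tau> | _ \<Rightarrow> 0)
                   | \<mu>. \<exists>w. msteps (mpoint 1 (Act C \<sigma>)) w \<mu>}"
    then obtain \<mu> w where e: "e = expect (restrict_md \<mu> (range Fin)) (\<lambda>c. case c of Fin \<tau> \<Rightarrow> f \<tau> | _ \<Rightarrow> 0)"
      and m: "msteps (mpoint 1 (Act C \<sigma>)) w \<mu>" by blast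
    have "e \<le> expect \<mu> (G False f)"
      unfolding e expect_def restrict_md_def
    proof (rule nn_integral_mono)
      fix x :: "real \<times> 'v conf"
      obtain a b where x: "x = (a, b)" by (cases x)
      show "ennreal (fst x) * of_nat (if snd x \<in> range Fin then \<mu> x else 0) *
              (case snd x of Fin \<tau> \<Rightarrow> f \<tau> | _ \<Rightarrow> 0)
            \<le> ennreal (fst x) * of_nat (\<mu> x) * G False f (snd x)"
        unfolding x by (simp only: fst_conv snd_conv restrict_le)
    qed
    also have "\<dots> \<le> ind False * w + expect \<mu> (G False f)" by (simp add: ind_def)
    also have "\<dots> \<le> expect (mpoint 1 (Act C \<sigma>)) (G False f)"
      by (rule msteps_pot[OF m])
    also have "\<dots> = evt C f \<sigma>" by (simp add: expect_mpoint evt_def)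
    finally show "e \<le> evt C f \<sigma>" .
  qed
qed

end
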